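(* Let $\Phi:\mathbf D\to\mathbf C$, $\Psi:\mathbf C\to\mathbf D$ (with homotopy $h$) be a deformation retract of finite-type chain complexes of real inner product spaces, and let $\mathcal M$ be its Morsification, with base $I^{\mathcal M}$ of $\mathbf C$ and set of critical cells $\mathcal M^0$. Then $$\mathrm{id}_{\mathbf C}-\Phi\Psi=\sum_{\alpha\in I^{\mathcal M}\setminus\mathcal M^0} i_\alpha\circ\pi_\alpha,$$ where $i_\alpha:C_\alpha\to\mathbf C$ is the inclusion of the summand and $\pi_\alpha:\mathbf C\to C_\alpha$ the projection along the other summands of the decomposition $\mathbf C_n=\bigoplus_{\alpha\in I^{\mathcal M}_n}C_\alpha$.
   Context: Deformation retract: chain maps with $\Psi\Phi=\mathrm{id}_{\mathbf D}$ and $\partial h+h\partial=\mathrm{id}_{\mathbf C}-\Phi\Psi$. One has $\mathbf C=\operatorname{Ker}\Psi\oplus\operatorname{Im}\Phi$ as chain complexes. The Morsification $\mathcal M$: give the subcomplex $\operatorname{Ker}\Psi$ (boundary $\partial'$) the restricted inner product and choose a Hodge basis of it, i.e. in each degree, via singular value decompositions, orthonormal bases $\mathcal R_+(\partial'_m)$ of $\operatorname{Im}\partial_m'^\dagger$ and $\mathcal L_+(\partial'_m)$ of $\operatorname{Im}\partial'_m$ with a bijection $v\mapsto w$, $\partial'_mv=\sigma w$, $\sigma>0$, together with a basis of $\operatorname{Ker}(\partial_m'^\dagger\partial'_m+\partial'_{m+1}\partial_{m+1}'^\dagger)$. The base $I^{\mathcal M}$ of $\mathbf C$ consists of the one-dimensional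 summands spanned by these vectors together with a decomposition of each $(\operatorname{Im}\Phi)_n$ into summands; the matching $\mathcal M$ consists of the edges $v\to w$ above, and the critical cells $\mathcal M^0$ are the unmatched ones. *)

theory Defs
  imports "HOL-Analysis.Analysis"
begin

text \<open>A graded real inner product space is modelled as a family of subspaces C n
(n an integer degree) of an ambient real inner product space; each C n carries the
restricted inner product.  Maps are indexed by the degree of their source.\<close>

definition lin_on :: "'a::real_vector set \<Rightarrow> ('a \<Rightarrow> 'b::real_vector) \<Rightarrow> bool" where
  "lin_on A f \<longleftrightarrow> (\<forall>x\<in>A. \<forall>y\<in>A. f (x + y) = f x + f y) \<and> (\<forall>c. \<forall>x\<in>A. f (c *\<^sub>R x) = c *\<^sub>R f x)"

definition fin_dim_subspace :: "'a::real_vector set \<Rightarrow> bool" where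
  "fin_dim_subspace A \<longleftrightarrow> (\<exists>B. finite B \<and> A = span B)"

definition chain_complex :: "(int \<Rightarrow> 'a::real_inner set) \<Rightarrow> (int \<Rightarrow> 'a \<Rightarrow> 'a) \<Rightarrow> bool" where
  "chain_complex C d \<longleftrightarrow>
     (\<forall>n. fin_dim_subspace (C n) \<and> lin_on (C n) (d n) \<and> d n ` C n \<subseteq> C (n - 1)
        \<and> (\<forall>x\<in>C n. d (n - 1) (d n x) = 0))"

definition chain_map :: "(int \<Rightarrow> 'a::real_vector set) \<Rightarrow> (int \<Rightarrow> 'a \<Rightarrow> 'a) \<Rightarrow>
     (int \<Rightarrow> 'b::real_vector set) \<Rightarrow> (int \<Rightarrow> 'b \<Rightarrow> 'b) \<Rightarrow> (int \<Rightarrow> 'a \<Rightarrow> 'b) \<Rightarrow> bool" where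
  "chain_map A dA B dB f \<longleftrightarrow>
     (\<forall>n. lin_on (A n) (f n) \<and> f n ` A n \<subseteq> B n \<and> (\<forall>x\<in>A n. dB n (f n x) = f (n - 1) (dA n x)))"

definition deformation_retract where
  "deformation_retract C dC D dD Phi Psi h \<longleftrightarrow>
     chain_complex C dC \<and> chain_complex D dD \<and>
     chain_map D dD C dC Phi \<and> chain_map C dC D dD Psi \<and>
     (\<forall>n. lin_on (C n) (h n) \<and> h n ` C n \<subseteq> C (n + 1)) \<and>
     (\<forall>n. \<forall>y\<in>D n. Psi n (Phi n y) = y) \<and>
     (\<forall>n. \<forall>x\<in>C n. dC (n + 1) (h n x) + h (n - 1) (dC n x) = x - Phi n (Psi n x))"

definition dagger :: "'a::real_inner set \<Rightarrow> ('a \<Rightarrow> 'a) \<Rightarrow> 'a \<Rightarrow> 'a" where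
  "dagger A f y = (THE z. z \<in> A \<and> (\<forall>x\<in>A. inner (f x) y = inner x z))"

definition orthonormal_basis_of :: "'a::real_inner set \<Rightarrow> 'a set \<Rightarrow> bool" where
  "orthonormal_basis_of B W \<longleftrightarrow> B \<subseteq> W \<and> independent B \<and> span B = W
      \<and> (\<forall>v\<in>B. norm v = 1) \<and> pairwise orthogonal B"

definition basis_of :: "'a::real_vector set \<Rightarrow> 'a set \<Rightarrow> bool" where
  "basis_of B W \<longleftrightarrow> B \<subseteq> W \<and> independent B \<and> span B = W"

definition direct_sum_decomp :: "'c set \<Rightarrow> ('c \<Rightarrow> 'a::real_vector set) \<Rightarrow> 'a set \<Rightarrow> bool" where
  "direct_sum_decomp I S W \<longleftrightarrow> finite I \<and> (\<forall>\<alpha>\<in>I. subspace (S \<alpha>) \<and> S \<alpha> \<subseteq> W) \<and>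
     (\<forall>x\<in>W. \<exists>!f. (\<forall>\<alpha>\<in>I. f \<alpha> \<in> S \<alpha>) \<and> (\<forall>\<alpha>. \<alpha> \<notin> I \<longrightarrow> f \<alpha> = 0) \<and> x = (\<Sum>\<alpha>\<in>I. f \<alpha>))"

text \<open>i_\<alpha> \<circ> \<pi>_\<alpha>: the component in S \<alpha> of x along the other summands.\<close>
definition proj_along :: "'c set \<Rightarrow> ('c \<Rightarrow> 'a::real_vector set) \<Rightarrow> 'c \<Rightarrow> 'a \<Rightarrow> 'a" where
  "proj_along I S \<alpha> x = (THE y. \<exists>f. (\<forall>\<beta>\<in>I. f \<beta> \<in> S \<beta>) \<and> (\<forall>\<beta>. \<beta> \<notin> I \<longrightarrow> f \<beta> = 0)
        \<and> x = (\<Sum>\<beta>\<in>I. f \<beta>) \<and> y = f \<alpha>)"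

text \<open>Cells: one-dimensional summands spanned by Hodge basis vectors of Ker \<Psi>,
and summands of the decomposition of Im \<Phi> (indexed by an arbitrary type 'i).\<close>
datatype ('v, 'i) mcell = Vec 'v | Smd 'i

definition kerPsi :: "(int \<Rightarrow> 'a set) \<Rightarrow> (int \<Rightarrow> 'a \<Rightarrow> 'b::zero) \<Rightarrow> int \<Rightarrow> 'a set" where
  "kerPsi C Psi n = {x \<in> C n. Psi n x = 0}"

text \<open>\<partial>'_m = restriction of \<partial>_m to K_m, and its adjoint \<partial>'_m^\<dagger> : K_(m-1) \<rightarrow> K_m.\<close>
definition harmonic_space where
  "harmonic_space K d m = {x \<in> K m.
      dagger (K m) (d m) (d m x) + d (m + 1) (dagger (K (m + 1)) (d (m + 1)) x) = 0}"

text \<open>Morsification data: R m = R_+(\<partial>'_m) \<subseteq> K_m, L m = L_+(\<partial>'_m) \<subseteq> K_(m-1),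
match m : R m \<rightarrow> L m the SVD bijection, H m a basis of the harmonic space in degree m,
and P n j (j \<in> J n) a direct sum decomposition of (Im \<Phi>)_n.\<close>
definition is_morsification where
  "is_morsification C dC D Phi Psi R L match H J P \<longleftrightarrow>
     (let K = kerPsi C Psi in
      (\<forall>m. orthonormal_basis_of (R m) (dagger (K m) (dC m) ` K (m - 1))) \<and>
      (\<forall>m. orthonormal_basis_of (L m) (dC m ` K m)) \<and>
      (\<forall>m. bij_betw (match m) (R m) (L m)) \<and>
      (\<forall>m. \<forall>v\<in>R m. \<exists>\<sigma>>0. dC m v = \<sigma> *\<^sub>R match m v) \<and>
      (\<forall>m. basis_of (H m) (harmonic_space K dC m)) \<and>
      (\<forall>n. direct_sum_decomp (J n) (P n) (Phi n ` D n)))"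

text \<open>The base I^M in degree n, the summand attached to each cell, the matching and
the critical cells.\<close>
definition morse_cells where
  "morse_cells R L H J n = Vec ` (R n \<union> L (n + 1) \<union> H n) \<union> Smd ` J n"

fun morse_summand :: "(int \<Rightarrow> 'i \<Rightarrow> 'v::real_vector set) \<Rightarrow> int \<Rightarrow> ('v, 'i) mcell \<Rightarrow> 'v set" where
  "morse_summand P n (Vec v) = span {v}"
| "morse_summand P n (Smd j) = P n j"

definition morse_matching where
  "morse_matching R match = {((n, Vec v), (n - 1, Vec (match n v))) | n v. v \<in> R n}"

definition critical_cells where
  "critical_cells R L H J match n = {\<alpha> \<in> morse_cells R L H J n.
      \<forall>e\<in>morse_matching R match. fst e \<noteq> (n, \<alpha>) \<and> snd e \<noteq> (n, \<alpha>)}"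

end

theory Submission
  imports Defs
begin


lemma lin_on_zero: assumes "subspace A" "lin_on A f" shows "f 0 = 0"
proof -
  have "0 \<in> A" using assms(1) by (simp add: subspace_0)
  then have "f (0 *\<^sub>R 0) = 0 *\<^sub>R f 0" using assms(2) unfolding lin_on_def by blast
  then show ?thesis by simp
qed

lemma fin_dim_sub: "fin_dim_subspace A \<Longrightarrow> subspace A"
  unfolding fin_dim_subspace_def by auto

lemma on_inner_sum:
  fixes U :: "'a::real_inner set"
  assumes "finite U" "\<forall>u\<in>U. norm u = 1" "pairwise orthogonal U" "w \<in> U"
  shows "(\<Sum>u\<in>U. c u *\<^sub>R u) \<bullet> w = c w"
proof -
  have "(\<Sum>u\<in>U. c u *\<^sub>R u) \<bullet> w = (\<Sum>u\<in>U. c u * (u \<bullet> w))"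
    by (simp add: inner_sum_left)
  also have "\<dots> = (\<Sum>u\<in>U. if u = w then c w else 0)"
  proof (rule sum.cong)
    fix u assume u: "u \<in> U"
    show "c u * (u \<bullet> w) = (if u = w then c w else 0)"
    proof (cases "u = w")
      case True
      then have "u \<bullet> w = 1" using assms u by (metis norm_eq_1)
      then show ?thesis using True by simp
    next
      case False
      then have "u \<bullet> w = 0" using assms u unfolding pairwise_def orthogonal_def by blast
      then show ?thesis using False by simp
    qed
  qed simp
  also have "\<dots> = c w" using assms by (simp add: sum.delta')
  finally show ?thesis .
qed

lemma on_proj:
  fixes U :: "'a::real_inner set"
  assumes "finite U" "\<forall>u\<in>U. norm u = 1" "pairwise orthogonal U"
  shows "\<forall>w\<in>span U. (x - (\<Sum>u\<in>U. (x \<bullet> u) *\<^sub>R u)) \<bullet> w = 0"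
proof
  fix w assume w: "w \<in> span U"
  have "orthogonal (x - (\<Sum>u\<in>U. (x \<bullet> u) *\<^sub>R u)) w"
  proof (rule orthogonal_to_span[OF w])
    fix y assume y: "y \<in> U"
    have "(\<Sum>u\<in>U. (x \<bullet> u) *\<^sub>R u) \<bullet> y = x \<bullet> y" using on_inner_sum[OF assms y] .
    then show "orthogonal (x - (\<Sum>u\<in>U. (x \<bullet> u) *\<^sub>R u)) y"
      unfolding orthogonal_def by (simp add: inner_diff_left)
  qed
  then show "(x - (\<Sum>u\<in>U. (x \<bullet> u) *\<^sub>R u)) \<bullet> w = 0" unfolding orthogonal_def .
qed

lemma on_expand:
  fixes U :: "'a::real_inner set"
  assumes "finite U" "\<forall>u\<in>U. norm u = 1" "pairwise orthogonal U" "x \<in> span U"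
  shows "x = (\<Sum>u\<in>U. (x \<bullet> u) *\<^sub>R u)"
proof -
  let ?z = "x - (\<Sum>u\<in>U. (x \<bullet> u) *\<^sub>R u)"
  have "?z \<in> span U" using assms(4) by (simp add: span_diff span_sum span_mul span_base)
  then have "?z \<bullet> ?z = 0" using on_proj[OF assms(1-3)] by blast
  then show ?thesis by simp
qed

lemma gram_schmidt:
  fixes B :: "'a::real_inner set"
  assumes "finite B"
  shows "\<exists>U. finite U \<and> (\<forall>u\<in>U. norm u = 1) \<and> pairwise orthogonal U \<and> span U = span B"
  using assms
proof (induction B rule: finite_induct)
  case empty
  show ?case by (rule exI[of _ "{}"]) auto
next
  case (insert b B)
  then obtain U where U: "finite U" "\<forall>u\<in>U. norm u = 1" "pairwise orthogonal U" "span U = span B"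
    by blast
  define c where "c = b - (\<Sum>u\<in>U. (b \<bullet> u) *\<^sub>R u)"
  have cU: "\<forall>w\<in>span U. c \<bullet> w = 0" unfolding c_def by (rule on_proj[OF U(1-3)])
  have bc: "b - c \<in> span U" unfolding c_def by (simp add: span_sum span_mul span_base)
  have sp: "span (insert b B) = span (insert c U)"
  proof -
    have "span (insert b B) = span (insert b U)"
      using U(4) by (simp add: span_insert)
    also have "\<dots> = span (insert c U)" by (rule eq_span_insert_eq[OF bc])
    finally show ?thesis .
  qed
  show ?case
  proof (cases "c = 0")
    case True
    then have "span (insert b B) = span U" using sp by (simp add: span_insert)
    then show ?thesis using U by metis
  next
    case False
    define c' where "c' = (1 / norm c) *\<^sub>R c"
    have nc: "norm c' = 1" using False unfolding c'_def by simp
    have c'U: "\<forall>u\<in>U. orthogonal c' u \<and> orthogonal u c'"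
      using cU unfolding c'_def orthogonal_def by (simp add: span_base inner_commute)
    have ce: "c = norm c *\<^sub>R c'" using False unfolding c'_def by simp
    have "span (insert c' U) = span (insert c U)"
      unfolding span_eq
    proof (intro conjI subsetI)
      fix x assume x: "x \<in> insert c' U"
      show "x \<in> span (insert c U)"
      proof (cases "x = c'")
        case True
        then show ?thesis unfolding c'_def by (simp only:) (rule span_mul[OF span_base], simp)
      next
        case False
        then show ?thesis using x by (simp add: span_base)
      qed
    next
      fix x assume x: "x \<in> insert c U"
      show "x \<in> span (insert c' U)"
      proof (cases "x = c")
        case True
        then show ?thesis by (simp only:) (subst ce, rule span_mul[OF span_base], simp)
      next
        case False
        then show ?thesis using x by (simp add: span_base)
      qed
    qed
    then have "span (insert c' U) = span (insert b B)" using sp by simp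
    moreover have "pairwise orthogonal (insert c' U)"
      using U(3) c'U by (simp add: pairwise_insert)
    ultimately show ?thesis using U nc by (intro exI[of _ "insert c' U"]) auto
  qed
qed

lemma fin_dim_sub_subspace:
  assumes "fin_dim_subspace A" "subspace S" "S \<subseteq> A"
  shows "fin_dim_subspace S"
proof -
  obtain B where B: "finite B" "A = span B" using assms(1) unfolding fin_dim_subspace_def by blast
  obtain B' where B': "B' \<subseteq> S" "independent B'" "S \<subseteq> span B'" by (rule maximal_independent_subset)
  have "finite B'" using independent_span_bound[OF B(1) B'(2)] B'(1) assms(3) B(2) by blast
  moreover have "span B' = S" using span_subspace[OF B'(1) B'(3) assms(2)] .
  ultimately show ?thesis unfolding fin_dim_subspace_def by blast
qed

lemma dagger_exists:
  assumes "fin_dim_subspace A" "lin_on A f"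
  shows "\<exists>z\<in>A. \<forall>x\<in>A. f x \<bullet> y = x \<bullet> z"
proof -
  obtain B where B: "finite B" "A = span B" using assms(1) unfolding fin_dim_subspace_def by blast
  obtain U where U: "finite U" "\<forall>u\<in>U. norm u = 1" "pairwise orthogonal U" "span U = span B"
    using gram_schmidt[OF B(1)] by blast
  have sA: "subspace A" using B(2) by simp
  have UA: "U \<subseteq> A" using U(4) B(2) span_superset by blast
  define z where "z = (\<Sum>u\<in>U. (f u \<bullet> y) *\<^sub>R u)"
  have zA: "z \<in> A" unfolding z_def using UA sA
    by (auto intro!: subspace_sum subspace_mul)
  have zu: "z \<bullet> u = f u \<bullet> y" if "u \<in> U" for u
    unfolding z_def using on_inner_sum[OF U(1-3) that] .
  have f0: "f 0 = 0" by (rule lin_on_zero[OF sA assms(2)])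
  have "x \<in> A \<and> f x \<bullet> y = x \<bullet> z" if x: "x \<in> A" for x
  proof -
    have "x \<in> span U" using x U(4) B(2) by simp
    then show ?thesis
    proof (induction rule: span_induct_alt)
      case base
      then show ?case using sA f0 by (simp add: subspace_0)
    next
      case (step c u w)
      have uA: "u \<in> A" using step.hyps UA by blast
      have cuA: "c *\<^sub>R u \<in> A" using uA sA by (simp add: subspace_mul)
      have "f (c *\<^sub>R u + w) = f (c *\<^sub>R u) + f w"
        using assms(2) cuA step.IH unfolding lin_on_def by blast
      also have "\<dots> = c *\<^sub>R f u + f w" using assms(2) uA unfolding lin_on_def by simp
      finally have "f (c *\<^sub>R u + w) \<bullet> y = c * (u \<bullet> z) + w \<bullet> z"
        using step.IH zu[OF step.hyps] by (simp add: inner_add_left inner_add_right inner_commute)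
      then show ?case using cuA step.IH sA by (simp add: subspace_add inner_add_left)
    qed
  qed
  then show ?thesis using zA by blast
qed

lemma dagger_prop:
  assumes "fin_dim_subspace A" "lin_on A f"
  shows "dagger A f y \<in> A \<and> (\<forall>x\<in>A. f x \<bullet> y = x \<bullet> dagger A f y)"
proof -
  obtain z where z: "z \<in> A" "\<forall>x\<in>A. f x \<bullet> y = x \<bullet> z" using dagger_exists[OF assms] by blast
  have sA: "subspace A" using assms(1) by (rule fin_dim_sub)
  have "dagger A f y = z" unfolding dagger_def
  proof (rule the_equality)
    show "z \<in> A \<and> (\<forall>x\<in>A. f x \<bullet> y = x \<bullet> z)" using z by blast
  next
    fix z' assume z': "z' \<in> A \<and> (\<forall>x\<in>A. f x \<bullet> y = x \<bullet> z')"
    have d: "z' - z \<in> A" using z' z sA by (simp add: subspace_diff)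
    have "(z' - z) \<bullet> z' = (z' - z) \<bullet> z" using z' z d by metis
    then have "(z' - z) \<bullet> (z' - z) = 0" by (simp add: inner_diff_right)
    then show "z' = z" by simp
  qed
  then show ?thesis using z by simp
qed



theorem mainTheorem7:
  fixes C :: "int \<Rightarrow> 'v::real_inner set" and dC :: "int \<Rightarrow> 'v \<Rightarrow> 'v"
    and D :: "int \<Rightarrow> 'w::real_inner set" and dD :: "int \<Rightarrow> 'w \<Rightarrow> 'w"
    and Phi :: "int \<Rightarrow> 'w \<Rightarrow> 'v" and Psi :: "int \<Rightarrow> 'v \<Rightarrow> 'w" and h :: "int \<Rightarrow> 'v \<Rightarrow> 'v"
    and R L H :: "int \<Rightarrow> 'v set" and match :: "int \<Rightarrow> 'v \<Rightarrow> 'v"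
    and J :: "int \<Rightarrow> 'i set" and P :: "int \<Rightarrow> 'i \<Rightarrow> 'v set"
  assumes "deformation_retract C dC D dD Phi Psi h"
    and "is_morsification C dC D Phi Psi R L match H J P"
    and "x \<in> C n"
  shows "x - Phi n (Psi n x) =
    (\<Sum>\<alpha>\<in>morse_cells R L H J n - critical_cells R L H J match n.
        proj_along (morse_cells R L H J n) (morse_summand P n) \<alpha> x)"
proof -
  define K where "K = kerPsi C Psi"
  have cc: "chain_complex C dC" and ccD: "chain_complex D dD"
    and Phim: "chain_map D dD C dC Phi" and Psim: "chain_map C dC D dD Psi"
    and hl: "\<And>m. lin_on (C m) (h m) \<and> h m ` C m \<subseteq> C (m + 1)"
    and PsiPhi: "\<And>m y. y \<in> D m \<Longrightarrow> Psi m (Phi m y) = y"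
    and hom: "\<And>m x. x \<in> C m \<Longrightarrow> dC (m + 1) (h m x) + h (m - 1) (dC m x) = x - Phi m (Psi m x)"
    using assms(1) unfolding deformation_retract_def by blast+
  have Cfin: "\<And>m. fin_dim_subspace (C m)" and dClin: "\<And>m. lin_on (C m) (dC m)"
    and dCC: "\<And>m x. x \<in> C m \<Longrightarrow> dC m x \<in> C (m - 1)"
    and dd: "\<And>m x. x \<in> C m \<Longrightarrow> dC (m - 1) (dC m x) = 0"
    using cc unfolding chain_complex_def by blast+
  have Dfin: "\<And>m. fin_dim_subspace (D m)" and dDlin: "\<And>m. lin_on (D m) (dD m)"
    using ccD unfolding chain_complex_def by blast+
  have Phil: "\<And>m. lin_on (D m) (Phi m)" and PhiD: "\<And>m y. y \<in> D m \<Longrightarrow> Phi m y \<in> C m"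
    and Phid: "\<And>m y. y \<in> D m \<Longrightarrow> dC m (Phi m y) = Phi (m - 1) (dD m y)"
    using Phim unfolding chain_map_def by blast+
  have Psil: "\<And>m. lin_on (C m) (Psi m)" and PsiC: "\<And>m y. y \<in> C m \<Longrightarrow> Psi m y \<in> D m"
    and Psid: "\<And>m y. y \<in> C m \<Longrightarrow> dD m (Psi m y) = Psi (m - 1) (dC m y)"
    using Psim unfolding chain_map_def by blast+
  have Csub: "\<And>m. subspace (C m)" using Cfin fin_dim_sub by blast
  have Dsub: "\<And>m. subspace (D m)" using Dfin fin_dim_sub by blast
  have Kdef: "\<And>m. K m = {x \<in> C m. Psi m x = 0}" unfolding K_def kerPsi_def by simp
  have Psi0: "\<And>m. Psi m 0 = 0" using lin_on_zero Csub Psil by blast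
  have Phi0: "\<And>m. Phi m 0 = 0" using lin_on_zero Dsub Phil by blast
  have dD0: "\<And>m. dD m 0 = 0" using lin_on_zero Dsub dDlin by blast
  have h0: "\<And>m. h m 0 = 0" using lin_on_zero Csub hl by blast
  have Psidiff: "Psi m (a - b) = Psi m a - Psi m b" if "a \<in> C m" "b \<in> C m" for m a b
  proof -
    have "- b \<in> C m" using that Csub subspace_neg by blast
    have "Psi m (- b) = - Psi m b" using Psil[of m] that unfolding lin_on_def
      by (metis scaleR_minus1_left)
    then show ?thesis using Psil[of m] that \<open>- b \<in> C m\<close> unfolding lin_on_def
      by (metis diff_conv_add_uminus)
  qed
  have Ksub: "\<And>m. subspace (K m)"
  proof -
    fix m
    show "subspace (K m)" unfolding subspace_def Kdef
      using Csub[of m] Psil[of m] Psi0[of m] unfolding lin_on_def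
      by (auto simp: subspace_0 subspace_add subspace_mul)
  qed
  have KC: "\<And>m. K m \<subseteq> C m" using Kdef by blast
  have Kfin: "\<And>m. fin_dim_subspace (K m)" using fin_dim_sub_subspace Cfin Ksub KC by blast
  have dK: "\<And>m x. x \<in> K m \<Longrightarrow> dC m x \<in> K (m - 1)"
    using Kdef dCC Psid dD0 by (metis (mono_tags, lifting) mem_Collect_eq)
  have dKlin: "\<And>m. lin_on (K m) (dC m)" using dClin KC unfolding lin_on_def by (meson subsetD)
  have dag: "\<And>m y. dagger (K m) (dC m) y \<in> K m \<and> (\<forall>x\<in>K m. dC m x \<bullet> y = x \<bullet> dagger (K m) (dC m) y)"
    using dagger_prop Kfin dKlin by blast
  have dd1: "\<And>m a. a \<in> C (m + 1) \<Longrightarrow> dC m (dC (m + 1) a) = 0"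
    using dd by (metis add_diff_cancel_right')
  have acyc: "\<exists>w\<in>K (m + 1). dC (m + 1) w = z" if z: "z \<in> K m" "dC m z = 0" for m z
  proof -
    have zC: "z \<in> C m" and Pz: "Psi m z = 0" using z Kdef by auto
    have "dC (m + 1) (h m z) = z" using hom[OF zC] z(2) h0 Pz Phi0 by simp
    define a where "a = h m z"
    have aC: "a \<in> C (m + 1)" using hl zC unfolding a_def by blast
    define w where "w = a - Phi (m + 1) (Psi (m + 1) a)"
    have pa: "Psi (m + 1) a \<in> D (m + 1)" using PsiC aC by blast
    have ppa: "Phi (m + 1) (Psi (m + 1) a) \<in> C (m + 1)" using PhiD pa by blast
    have wC: "w \<in> C (m + 1)" unfolding w_def using aC ppa Csub subspace_diff by blast
    have "Psi (m + 1) w = 0" unfolding w_def using Psidiff[OF aC ppa] PsiPhi[OF pa] by simp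
    then have wK: "w \<in> K (m + 1)" using wC Kdef by blast
    have dlin: "dC (m + 1) w = dC (m + 1) a - dC (m + 1) (Phi (m + 1) (Psi (m + 1) a))"
    proof -
      have "- Phi (m + 1) (Psi (m + 1) a) \<in> C (m + 1)" using ppa Csub subspace_neg by blast
      moreover have "dC (m + 1) (- Phi (m + 1) (Psi (m + 1) a)) = - dC (m + 1) (Phi (m + 1) (Psi (m + 1) a))"
        using dClin[of "m+1"] ppa unfolding lin_on_def by (metis scaleR_minus1_left)
      ultimately show ?thesis unfolding w_def using dClin[of "m+1"] aC unfolding lin_on_def
        by (metis diff_conv_add_uminus)
    qed
    have "dC (m + 1) (Phi (m + 1) (Psi (m + 1) a)) = Phi m (dD (m + 1) (Psi (m + 1) a))"
      using Phid[OF pa] by simp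
    also have "\<dots> = Phi m (Psi m (dC (m + 1) a))" using Psid[OF aC] by simp
    also have "\<dots> = 0" using \<open>dC (m + 1) (h m z) = z\<close> Pz Phi0 unfolding a_def by simp
    finally have "dC (m + 1) w = z" using dlin \<open>dC (m + 1) (h m z) = z\<close> unfolding a_def by simp
    then show ?thesis using wK by blast
  qed
  have harm: "z = 0" if z: "z \<in> harmonic_space K dC m" for m z
  proof -
    have zK: "z \<in> K m" and eq: "dagger (K m) (dC m) (dC m z) + dC (m + 1) (dagger (K (m + 1)) (dC (m + 1)) z) = 0"
      using z unfolding harmonic_space_def by auto
    define a where "a = dagger (K m) (dC m) (dC m z)"
    define b where "b = dagger (K (m + 1)) (dC (m + 1)) z"
    have za: "z \<bullet> a = dC m z \<bullet> dC m z" unfolding a_def using dag zK by metis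
    have bK: "b \<in> K (m + 1)" unfolding b_def using dag by blast
    have zb: "dC (m + 1) b \<bullet> z = b \<bullet> b" unfolding b_def using dag bK by metis
    have "0 = z \<bullet> (a + dC (m + 1) b)" using eq unfolding a_def b_def by simp
    also have "\<dots> = dC m z \<bullet> dC m z + b \<bullet> b" using za zb by (simp add: inner_add_right inner_commute)
    finally have "dC m z \<bullet> dC m z + b \<bullet> b = 0" by simp
    then have d0: "dC m z = 0" and b0: "b = 0"
      by (smt (verit) inner_ge_zero inner_eq_zero_iff)+
    obtain w where wK: "w \<in> K (m + 1)" and wz: "dC (m + 1) w = z" using acyc[OF zK d0] by blast
    have "z \<bullet> z = w \<bullet> b" unfolding b_def using dag wK wz by metis
    then show "z = 0" using b0 by simp
  qed
  have Rb: "\<And>m. orthonormal_basis_of (R m) (dagger (K m) (dC m) ` K (m - 1))"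
    and Lb: "\<And>m. orthonormal_basis_of (L m) (dC m ` K m)"
    and mb: "\<And>m. bij_betw (match m) (R m) (L m)"
    and Hb: "\<And>m. basis_of (H m) (harmonic_space K dC m)"
    and Pd: "\<And>m. direct_sum_decomp (J m) (P m) (Phi m ` D m)"
    using assms(2) unfolding is_morsification_def Let_def K_def by blast+
  have Hempty: "\<And>m. H m = {}"
  proof -
    fix m
    have "H m \<subseteq> harmonic_space K dC m" using Hb[of m] unfolding basis_of_def by blast
    then have "H m \<subseteq> {0}" using harm[of _ m] by blast
    moreover have "0 \<notin> H m" using Hb[of m] dependent_zero[of "H m"] unfolding basis_of_def by blast
    ultimately show "H m = {}" by blast
  qed
  have orth: "r \<bullet> l = 0" if rR: "r \<in> R m" and lL: "l \<in> L (m + 1)" for r l m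
  proof -
    have "R m \<subseteq> dagger (K m) (dC m) ` K (m - 1)" using Rb[of m] unfolding orthonormal_basis_of_def by (elim conjE)
    then obtain b where b: "b \<in> K (m - 1)" "r = dagger (K m) (dC m) b"
      using rR by blast
    have "L (m + 1) \<subseteq> dC (m + 1) ` K (m + 1)" using Lb[of "m+1"] unfolding orthonormal_basis_of_def by (elim conjE)
    then obtain a where a: "a \<in> K (m + 1)" "l = dC (m + 1) a"
      using lL by blast
    have lK: "l \<in> K m" using dK[OF a(1)] a(2) by simp
    have "dC m l \<bullet> b = l \<bullet> r" using dag[of m b] lK b(2) by simp
    moreover have "dC m l = 0" using a dd1[of a m] KC[of "m+1"] by blast
    ultimately show ?thesis by (simp add: inner_commute)
  qed
  define U where "U = R n \<union> L (n + 1)"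
  have RK: "R m \<subseteq> K m" for m
  proof
    fix r assume "r \<in> R m"
    then obtain b where "r = dagger (K m) (dC m) b"
      using Rb[of m] unfolding orthonormal_basis_of_def by blast
    then show "r \<in> K m" using dag[of m b] by simp
  qed
  have LK: "L (m + 1) \<subseteq> K m" for m
  proof
    fix l assume "l \<in> L (m + 1)"
    then obtain a where "a \<in> K (m + 1)" "l = dC (m + 1) a"
      using Lb[of "m+1"] unfolding orthonormal_basis_of_def by blast
    then show "l \<in> K m" using dK[of a "m+1"] by simp
  qed
  have UK: "U \<subseteq> K n" unfolding U_def using RK LK by blast
  have Unorm: "\<forall>u\<in>U. norm u = 1" unfolding U_def using Rb Lb unfolding orthonormal_basis_of_def by blast
  have Uorth: "pairwise orthogonal U" unfolding U_def pairwise_def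
  proof (intro ballI impI)
    fix u v assume u: "u \<in> R n \<union> L (n + 1)" and v: "v \<in> R n \<union> L (n + 1)" and uv: "u \<noteq> v"
    have pR: "pairwise orthogonal (R n)" using Rb[of n] unfolding orthonormal_basis_of_def by blast
    have pL: "pairwise orthogonal (L (n + 1))" using Lb[of "n+1"] unfolding orthonormal_basis_of_def by blast
    show "orthogonal u v"
    proof (cases "u \<in> R n")
      case uR: True
      show ?thesis
      proof (cases "v \<in> R n")
        case True then show ?thesis using pR uR uv unfolding pairwise_def by blast
      next
        case False then have "v \<in> L (n + 1)" using v by blast
        then show ?thesis using orth[OF uR] unfolding orthogonal_def by blast
      qed
    next
      case uL: False
      then have uL: "u \<in> L (n + 1)" using u by blast
      show ?thesis
      proof (cases "v \<in> R n")
        case True then show ?thesis using orth[OF True uL] unfolding orthogonal_def by (simp add: inner_commute)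
      next
        case False then have "v \<in> L (n + 1)" using v by blast
        then show ?thesis using pL uL uv unfolding pairwise_def by blast
      qed
    qed
  qed
  have Ufin: "finite U"
  proof -
    obtain B where B: "finite B" "K n = span B" using Kfin[of n] unfolding fin_dim_subspace_def by blast
    have "independent U" using pairwise_orthogonal_independent[OF Uorth] Unorm by force
    then show ?thesis using independent_span_bound[OF B(1)] UK B(2) by blast
  qed
  have Kspan: "K n \<subseteq> span U"
  proof
    fix k assume k: "k \<in> K n"
    define y where "y = (\<Sum>u\<in>U. (k \<bullet> u) *\<^sub>R u)"
    define z where "z = k - y"
    have zU: "\<forall>w\<in>span U. z \<bullet> w = 0" unfolding z_def y_def by (rule on_proj[OF Ufin Unorm Uorth])
    have yU: "y \<in> span U" unfolding y_def by (simp add: span_sum span_mul span_base)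
    have "span U \<subseteq> K n" using UK Ksub span_minimal by blast
    then have zK: "z \<in> K n" unfolding z_def using yU k Ksub subspace_diff by blast
    have "dC n z \<in> K (n - 1)" using dK[OF zK] .
    then have "dagger (K n) (dC n) (dC n z) \<in> span (R n)"
      using Rb[of n] unfolding orthonormal_basis_of_def by (metis image_eqI)
    then have "dagger (K n) (dC n) (dC n z) \<in> span U" unfolding U_def by (meson span_mono sup_ge1 subsetD)
    then have "z \<bullet> dagger (K n) (dC n) (dC n z) = 0" using zU by blast
    moreover have "dC n z \<bullet> dC n z = z \<bullet> dagger (K n) (dC n) (dC n z)" using dag[of n "dC n z"] zK by blast
    ultimately have "dC n z = 0" by simp
    then obtain w where wK: "w \<in> K (n + 1)" and wz: "dC (n + 1) w = z" using acyc[OF zK] by blast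
    then have "z \<in> span (L (n + 1))" using Lb[of "n+1"] unfolding orthonormal_basis_of_def by (metis image_eqI)
    then have "z \<in> span U" unfolding U_def by (meson span_mono sup_ge2 subsetD)
    then have "z \<bullet> z = 0" using zU by blast
    then have "z = 0" by simp
    then show "k \<in> span U" using yU unfolding z_def by simp
  qed
  define M where "M = morse_cells R L H J n"
  define S where "S = morse_summand P n"
  define W where "W = Phi n ` D n"
  have Meq: "M = Vec ` U \<union> Smd ` J n" unfolding M_def morse_cells_def U_def using Hempty by simp
  have Jfin: "finite (J n)" and Psub: "\<And>j. j \<in> J n \<Longrightarrow> subspace (P n j) \<and> P n j \<subseteq> W"
    and Puniq: "\<And>y. y \<in> W \<Longrightarrow> \<exists>!f. (\<forall>j\<in>J n. f j \<in> P n j) \<and> (\<forall>j. j \<notin> J n \<longrightarrow> f j = 0) \<and> y = (\<Sum>j\<in>J n. f j)"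
    using Pd[of n] unfolding direct_sum_decomp_def W_def by blast+
  have Wsub: "subspace W" unfolding subspace_def W_def
  proof (intro conjI ballI allI)
    show "0 \<in> Phi n ` D n" using Phi0 Dsub subspace_0 by (metis image_eqI)
  next
    fix a b assume "a \<in> Phi n ` D n" "b \<in> Phi n ` D n"
    then obtain a' b' where "a' \<in> D n" "b' \<in> D n" "a = Phi n a'" "b = Phi n b'" by blast
    then show "a + b \<in> Phi n ` D n" using Phil[of n] Dsub[of n] unfolding lin_on_def
      by (metis image_eqI subspace_add)
  next
    fix c a assume "a \<in> Phi n ` D n"
    then obtain a' where "a' \<in> D n" "a = Phi n a'" by blast
    then show "c *\<^sub>R a \<in> Phi n ` D n" using Phil[of n] Dsub[of n] unfolding lin_on_def
      by (metis image_eqI subspace_mul)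
  qed
  have KW: "y = 0" if yK: "y \<in> K n" and yW: "y \<in> W" for y
  proof -
    obtain y' where y': "y' \<in> D n" "y = Phi n y'" using yW unfolding W_def by blast
    have "Psi n y = 0" using yK Kdef by blast
    then have "y' = 0" using PsiPhi[OF y'(1)] y'(2) by simp
    then show ?thesis using y'(2) Phi0 by simp
  qed
  have Mfin: "finite M" unfolding Meq using Ufin Jfin by simp
  have disj: "Vec ` U \<inter> Smd ` J n = {}" by auto
  have sumM: "(\<Sum>\<alpha>\<in>M. g \<alpha>) = (\<Sum>v\<in>U. g (Vec v)) + (\<Sum>j\<in>J n. g (Smd j))" for g :: "('v, 'i) mcell \<Rightarrow> 'v"
    unfolding Meq using Ufin Jfin disj
    by (simp add: sum.union_disjoint sum.reindex inj_on_def)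
  define dec where "dec f y \<longleftrightarrow> (\<forall>\<beta>\<in>M. f \<beta> \<in> S \<beta>) \<and> (\<forall>\<beta>. \<beta> \<notin> M \<longrightarrow> f \<beta> = 0) \<and> y = (\<Sum>\<beta>\<in>M. f \<beta>)" for f y
  have uniq: "f = g" if f: "dec f y" and g: "dec g y" for f g y
  proof -
    define d where "d \<beta> = f \<beta> - g \<beta>" for \<beta>
    have Ssub: "subspace (S \<beta>)" if "\<beta> \<in> M" for \<beta>
    proof (cases \<beta>)
      case (Vec v) then show ?thesis unfolding S_def by simp
    next
      case (Smd j) then have "j \<in> J n" using that unfolding Meq by auto
      then show ?thesis using Psub Smd unfolding S_def by simp
    qed
    have dS: "d \<beta> \<in> S \<beta>" if "\<beta> \<in> M" for \<beta>
      using f g that Ssub[OF that] unfolding dec_def d_def by (simp add: subspace_diff)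
    have "(\<Sum>\<beta>\<in>M. d \<beta>) = (\<Sum>\<beta>\<in>M. f \<beta>) - (\<Sum>\<beta>\<in>M. g \<beta>)" unfolding d_def by (simp add: sum_subtractf)
    also have "\<dots> = 0" using f g unfolding dec_def by simp
    finally have s0: "(\<Sum>v\<in>U. d (Vec v)) + (\<Sum>j\<in>J n. d (Smd j)) = 0" using sumM by simp
    define a where "a = (\<Sum>v\<in>U. d (Vec v))"
    define b where "b = (\<Sum>j\<in>J n. d (Smd j))"
    have dv: "d (Vec v) = (d (Vec v) \<bullet> v) *\<^sub>R v" if "v \<in> U" for v
    proof -
      have "Vec v \<in> M" unfolding Meq using that by simp
      then have "d (Vec v) \<in> span {v}" using dS[of "Vec v"] unfolding S_def by simp
      then obtain t where t: "d (Vec v) = t *\<^sub>R v" unfolding span_singleton by auto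
      have "v \<bullet> v = 1" using Unorm that by (metis norm_eq_1)
      then show ?thesis using t by simp
    qed
    have "span U \<subseteq> K n" using UK Ksub span_minimal by blast
    moreover have "a \<in> span U" unfolding a_def
    proof (rule span_sum)
      fix v assume "v \<in> U"
      then show "d (Vec v) \<in> span U" by (subst dv) (auto intro: span_mul span_base)
    qed
    ultimately have aK: "a \<in> K n" by blast
    have bW: "b \<in> W" unfolding b_def
    proof (rule subspace_sum[OF Wsub])
      fix j assume j: "j \<in> J n"
      then have "Smd j \<in> M" unfolding Meq by simp
      then have "d (Smd j) \<in> P n j" using dS[of "Smd j"] unfolding S_def by simp
      then show "d (Smd j) \<in> W" using Psub[OF j] by blast
    qed
    have "a = - b" using s0 unfolding a_def b_def by (simp add: eq_neg_iff_add_eq_0)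
    then have "a \<in> W" using bW Wsub subspace_neg by metis
    then have a0: "a = 0" using KW aK by blast
    then have b0: "b = 0" using s0 unfolding a_def b_def by simp
    have dV0: "d (Vec v) = 0" if v: "v \<in> U" for v
    proof -
      have "a = (\<Sum>u\<in>U. (d (Vec u) \<bullet> u) *\<^sub>R u)" unfolding a_def using dv by (simp cong: sum.cong)
      then have "a \<bullet> v = d (Vec v) \<bullet> v" using on_inner_sum[OF Ufin Unorm Uorth v] by simp
      then have "d (Vec v) \<bullet> v = 0" using a0 by simp
      then show ?thesis using dv[OF v] by simp
    qed
    have dJ0: "d (Smd j) = 0" if j: "j \<in> J n" for j
    proof -
      have zW: "0 \<in> W" using Wsub subspace_0 by blast
      define e where "e j' = (if j' \<in> J n then d (Smd j') else 0)" for j'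
      have e1: "(\<forall>j\<in>J n. e j \<in> P n j) \<and> (\<forall>j. j \<notin> J n \<longrightarrow> e j = 0) \<and> 0 = (\<Sum>j\<in>J n. e j)"
      proof (intro conjI ballI allI impI)
        fix j assume j: "j \<in> J n"
        then have "Smd j \<in> M" unfolding Meq by simp
        then show "e j \<in> P n j" using dS[of "Smd j"] j unfolding S_def e_def by simp
      next
        have "(\<Sum>j\<in>J n. e j) = b" unfolding b_def e_def by (rule sum.cong) simp_all
        then show "0 = (\<Sum>j\<in>J n. e j)" using b0 by simp
      qed (simp add: e_def)
      have e2: "(\<forall>j\<in>J n. (\<lambda>_. 0) j \<in> P n j) \<and> (\<forall>j. j \<notin> J n \<longrightarrow> (\<lambda>_. (0::'v)) j = 0) \<and> 0 = (\<Sum>j\<in>J n. (\<lambda>_. (0::'v)) j)"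
        using Psub[THEN conjunct1, THEN subspace_0] by simp
      have "e = (\<lambda>_. 0)"
      proof (rule ex1E[OF Puniq[OF zW]])
        fix q assume U': "\<forall>y. (\<forall>j\<in>J n. y j \<in> P n j) \<and> (\<forall>j. j \<notin> J n \<longrightarrow> y j = 0) \<and> 0 = (\<Sum>j\<in>J n. y j) \<longrightarrow> y = q"
        have "e = q" by (rule mp[OF spec[OF U', of e] e1])
        moreover have "(\<lambda>_. 0) = q" by (rule mp[OF spec[OF U', of "\<lambda>_. 0"] e2])
        ultimately show "e = (\<lambda>_. 0)" by simp
      qed
      then have "e j = 0" by simp
      then show ?thesis using j unfolding e_def by simp
    qed
    show "f = g"
    proof
      fix \<beta>
      show "f \<beta> = g \<beta>"
      proof (cases "\<beta> \<in> M")
        case False then show ?thesis using f g unfolding dec_def by simp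
      next
        case True
        then have "d \<beta> = 0"
        proof (cases \<beta>)
          case (Vec v) then show ?thesis using True dV0 unfolding Meq by auto
        next
          case (Smd j) then show ?thesis using True dJ0 unfolding Meq by auto
        qed
        then show ?thesis unfolding d_def by simp
      qed
    qed
  qed
  define k where "k = x - Phi n (Psi n x)"
  have pD: "Psi n x \<in> D n" using PsiC assms(3) by blast
  have pC: "Phi n (Psi n x) \<in> C n" using PhiD pD by blast
  have kK: "k \<in> K n"
  proof -
    have "k \<in> C n" unfolding k_def using assms(3) pC Csub subspace_diff by blast
    moreover have "Psi n k = 0" unfolding k_def using Psidiff[OF assms(3) pC] PsiPhi[OF pD] by simp
    ultimately show ?thesis using Kdef by blast
  qed
  have pW: "Phi n (Psi n x) \<in> W" unfolding W_def using pD by blast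
  obtain g where g: "\<forall>j\<in>J n. g j \<in> P n j" "\<forall>j. j \<notin> J n \<longrightarrow> g j = 0" "Phi n (Psi n x) = (\<Sum>j\<in>J n. g j)"
    using Puniq[OF pW] by blast
  define f where "f \<alpha> = (case \<alpha> of Vec v \<Rightarrow> if v \<in> U then (k \<bullet> v) *\<^sub>R v else 0 | Smd j \<Rightarrow> g j)" for \<alpha>
  have kexp: "k = (\<Sum>v\<in>U. (k \<bullet> v) *\<^sub>R v)" using on_expand[OF Ufin Unorm Uorth] Kspan kK by blast
  have fdec: "dec f x"
    unfolding dec_def
  proof (intro conjI ballI allI impI)
    fix \<beta> assume b: "\<beta> \<in> M"
    show "f \<beta> \<in> S \<beta>"
    proof (cases \<beta>)
      case (Vec v)
      then have "v \<in> U" using b unfolding Meq by auto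
      then show ?thesis using Vec unfolding f_def S_def by (simp add: span_mul span_base)
    next
      case (Smd j)
      then have "j \<in> J n" using b unfolding Meq by auto
      then show ?thesis using Smd g(1) unfolding f_def S_def by simp
    qed
  next
    fix \<beta> assume b: "\<beta> \<notin> M"
    show "f \<beta> = 0"
    proof (cases \<beta>)
      case (Vec v)
      then have "v \<notin> U" using b unfolding Meq by auto
      then show ?thesis using Vec unfolding f_def by simp
    next
      case (Smd j)
      then have "j \<notin> J n" using b unfolding Meq by auto
      then show ?thesis using Smd g(2) unfolding f_def by simp
    qed
  next
    have "(\<Sum>\<beta>\<in>M. f \<beta>) = (\<Sum>v\<in>U. f (Vec v)) + (\<Sum>j\<in>J n. f (Smd j))" by (rule sumM)
    also have "\<dots> = k + Phi n (Psi n x)" using kexp g(3) unfolding f_def by simp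
    finally show "x = (\<Sum>\<beta>\<in>M. f \<beta>)" unfolding k_def by simp
  qed
  have proj: "proj_along M S \<alpha> x = f \<alpha>" for \<alpha>
    unfolding proj_along_def
  proof (rule the_equality)
    show "\<exists>f'. (\<forall>\<beta>\<in>M. f' \<beta> \<in> S \<beta>) \<and> (\<forall>\<beta>. \<beta> \<notin> M \<longrightarrow> f' \<beta> = 0) \<and> x = sum f' M \<and> f \<alpha> = f' \<alpha>"
      using fdec unfolding dec_def by blast
  next
    fix y assume "\<exists>f'. (\<forall>\<beta>\<in>M. f' \<beta> \<in> S \<beta>) \<and> (\<forall>\<beta>. \<beta> \<notin> M \<longrightarrow> f' \<beta> = 0) \<and> x = sum f' M \<and> y = f' \<alpha>"
    then obtain f' where "dec f' x" "y = f' \<alpha>" unfolding dec_def by blast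
    then show "y = f \<alpha>" using uniq[OF _ fdec] by blast
  qed
  have ncrit: "M - critical_cells R L H J match n = Vec ` U"
  proof (intro equalityI subsetI)
    fix \<alpha> assume a: "\<alpha> \<in> M - critical_cells R L H J match n"
    then have aM: "\<alpha> \<in> M" by blast
    have "\<alpha> \<notin> critical_cells R L H J match n" using a by blast
    then have "\<not> (\<forall>e\<in>morse_matching R match. fst e \<noteq> (n, \<alpha>) \<and> snd e \<noteq> (n, \<alpha>))"
      using aM unfolding critical_cells_def M_def by simp
    then obtain e where e: "e \<in> morse_matching R match" "fst e = (n, \<alpha>) \<or> snd e = (n, \<alpha>)"
      by blast
    obtain m w where "e = ((m, Vec w), (m - 1, Vec (match m w)))"
      using e(1) unfolding morse_matching_def by blast
    then obtain v where "\<alpha> = Vec v" using e(2) by auto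
    then show "\<alpha> \<in> Vec ` U" using aM unfolding Meq by auto
  next
    fix \<alpha> :: "('v, 'i) mcell" assume "\<alpha> \<in> Vec ` U"
    then obtain v where v: "v \<in> U" "\<alpha> = Vec v" by blast
    have aM: "\<alpha> \<in> M" unfolding Meq using v by simp
    have ex: "\<exists>e\<in>morse_matching R match. fst e = (n, \<alpha>) \<or> snd e = (n, \<alpha>)"
    proof (cases "v \<in> R n")
      case True
      have "((n, Vec v), (n - 1, Vec (match n v))) \<in> morse_matching R match"
        unfolding morse_matching_def
        by (rule CollectI, rule exI[of _ n], rule exI[of _ v]) (simp add: True)
      then show ?thesis using v(2) by (intro bexI[of _ "((n, Vec v), (n - 1, Vec (match n v)))"]) simp_all
    next
      case False
      then have vL: "v \<in> L (n + 1)" using v(1) unfolding U_def by blast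
      have "match (n + 1) ` R (n + 1) = L (n + 1)" using mb[of "n+1"] unfolding bij_betw_def by (elim conjE)
      then obtain v' where v': "v' \<in> R (n + 1)" "match (n + 1) v' = v"
        using vL by (metis imageE)
      have "((n + 1, Vec v'), (n + 1 - 1, Vec (match (n + 1) v'))) \<in> morse_matching R match"
        unfolding morse_matching_def
        by (rule CollectI, rule exI[of _ "n+1"], rule exI[of _ v']) (simp add: v'(1))
      then show ?thesis using v(2) v'(2)
        by (intro bexI[of _ "((n + 1, Vec v'), (n + 1 - 1, Vec (match (n + 1) v')))"]) simp_all
    qed
    have "\<alpha> \<notin> critical_cells R L H J match n"
    proof
      assume "\<alpha> \<in> critical_cells R L H J match n"
      then have "\<forall>e\<in>morse_matching R match. fst e \<noteq> (n, \<alpha>) \<and> snd e \<noteq> (n, \<alpha>)"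
        unfolding critical_cells_def by simp
      then show False using ex by blast
    qed
    then show "\<alpha> \<in> M - critical_cells R L H J match n" using aM by blast
  qed
  have "(\<Sum>\<alpha>\<in>M - critical_cells R L H J match n. proj_along M S \<alpha> x) = (\<Sum>v\<in>U. f (Vec v))"
    unfolding ncrit proj by (simp add: sum.reindex inj_on_def)
  also have "\<dots> = k" using kexp unfolding f_def by simp
  finally show ?thesis unfolding M_def S_def k_def by simp
qed

end
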